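(* Let $\Sigma_A=(X,X_0,U,M,G_A,O_A)$ be the augmented transition system and let $\eta_x,\eta_u>0$, $M_{\max}\in\mathbb{N}_{>0}$ and $\varepsilon\ge\eta_x$. Let $\widetilde\Sigma^\varepsilon_A=(\widetilde X,\widetilde X_0,\widetilde U,\widetilde M,\widetilde G_A,\widetilde O_A)$ be the symbolic model of $\Sigma_A$ with these parameters. Then the relation $$R(\varepsilon)=\{(\tilde x,x)\in\widetilde X\times X:\ \|\tilde x-x\|\le\varepsilon\}$$ is a strong $\varepsilon$-approximate alternating simulation relation (strong $\varepsilon$-ASR) from $\widetilde\Sigma^\varepsilon_A$ to $\Sigma_A$.
   Context: Standing setup: a plant $x_{k+1}=f(x_k,u_k)$ with $f:\mathbb{R}^{n_x}\times\mathbb{R}^{n_u}\to\mathbb{R}^{n_x}$, compact initial set $X_0\subset\mathbb{R}^{n_x}$ and compact input set $U\subset\mathbb{R}^{n_u}$; there is $L_x\ge0$ with $\|f(x_1,u)-f(x_2,u)\|\le L_x\|x_1-x_2\|$ for all $x_1,x_2\in\mathbb{R}^{n_x}$, $u\in U$. $\|\cdot\|$ is the Euclidean norm and $\mathcal{B}_r(y)=\{y':\|y'-y\|\le r\}$. $\phi(x,u,m)$ ($m\ge1$ integer) is the state reached from $x$ by applying $u$ constantly for $m$ steps: $x_0=x$, $x_{k+1}=f(x_k,u)$, $\phi(x,u,m)=x_m$. Lattice: for $Y\subseteq\mathbb{R}^n$ and $\eta>0$, $[Y]_\eta=\{y\in Y:\ y_i=\frac{2\eta}{\sqrt n}a_i,\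 a_i\in\mathbb{Z},\ i=1,\dots,n\}$. Augmented transition system $\Sigma_A=(X,X_0,U,M,G_A,O_A)$: $X=\mathbb{R}^{n_x}$; $M=\mathbb{N}_{>0}$; $x^+\in G_A(x,u,m)$ iff $x^+=\phi(x,u,m)$; $O_A(x,u,m)$ is a set of finite state sequences with $(x_1,\dots,x_m)\in O_A(x,u,m)$ iff $x_p\in G_A(x,u,p)$ for all $p=1,\dots,m$. Symbolic model $\widetilde\Sigma^\varepsilon_A=(\widetilde X,\widetilde X_0,\widetilde U,\widetilde M,\widetilde G_A,\widetilde O_A)$ (defined for $\varepsilon\ge\eta_x$): $\widetilde X=[\mathbb{R}^{n_x}]_{\eta_x}$, $\widetilde X_0=[X_0]_{\eta_x}$, $\widetilde U=[U]_{\eta_u}$, $\widetilde M=\{1,\dots,M_{\max}\}$; $\tilde x^+\in\widetilde G_A(\tilde x,\tilde u,\tilde m)$ iff $\tilde x^+\in\widetilde X\cap\mathcal{B}_{\varepsilon_{\tilde m}}(\phi(\tilde x,\tilde u,\tilde m))$ where $\varepsilon_{\tilde m}=L_x^{\tilde m}\varepsilon+\eta_x$; $(\tilde x_1,\dots,\tilde x_{\tilde m})\in\widetilde O_A(\tilde x,\tilde u,\tilde m)$ iff $\tilde x_p\in\widetilde G_A(\tilde x,\tilde u,p)$ for all $p=1,\dots,\tilde m$. Strong $\varepsilon$-ASR: a relation $R\subseteq\widetilde X\times X$ is a strong $\varepsilon$-ASR from $\widetilde\Sigma^\varepsilon_A$ to $\Sigma_A$ if (D1) for every $\tilde x_0\in\widetilde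 X_0$ there is $x_0\in X_0$ with $(\tilde x_0,x_0)\in R$; (D2) every $(\tilde x,x)\in R$ satisfies $\|\tilde x-x\|\le\varepsilon$; (D3) for every $(\tilde x,x)\in R$ and every $\tilde u\in\widetilde U$, $\tilde m\in\widetilde M$, taking $u=\tilde u\in U$ and $m=\tilde m\in M$, for every $(x_1,\dots,x_m)\in O_A(x,u,m)$ there exists $(\tilde x_1,\dots,\tilde x_{m})\in\widetilde O_A(\tilde x,\tilde u,\tilde m)$ with $(\tilde x_p,x_p)\in R$ for all $p=1,\dots,m$. *)

theory Defs
  imports "HOL-Analysis.Analysis"
begin

definition lattice :: "(real^'n) set \<Rightarrow> real \<Rightarrow> (real^'n) set" where
  "lattice Y \<eta> = {y \<in> Y. \<forall>i. \<exists>a::int. y $ i = (2 * \<eta> / sqrt (real CARD('n))) * real_of_int a}"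

definition phi :: "(real^'n \<Rightarrow> real^'m \<Rightarrow> real^'n) \<Rightarrow> real^'n \<Rightarrow> real^'m \<Rightarrow> nat \<Rightarrow> real^'n" where
  "phi f x u m = ((\<lambda>z. f z u) ^^ m) x"

text \<open>Augmented transition system: transition map and output map.
  Finite state sequences (x_1,...,x_m) are lists of length m, x_p = xs ! (p-1).\<close>
definition G_A :: "(real^'n \<Rightarrow> real^'m \<Rightarrow> real^'n) \<Rightarrow> real^'n \<Rightarrow> real^'m \<Rightarrow> nat \<Rightarrow> (real^'n) set" where
  "G_A f x u m = {x'. x' = phi f x u m}"

definition O_A :: "(real^'n \<Rightarrow> real^'m \<Rightarrow> real^'n) \<Rightarrow> real^'n \<Rightarrow> real^'m \<Rightarrow> nat \<Rightarrow> (real^'n) list set" where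
  "O_A f x u m = {xs. length xs = m \<and> (\<forall>p\<in>{1..m}. xs ! (p - 1) \<in> G_A f x u p)}"

definition G_sym :: "(real^'n \<Rightarrow> real^'m \<Rightarrow> real^'n) \<Rightarrow> real \<Rightarrow> real \<Rightarrow> real \<Rightarrow>
    real^'n \<Rightarrow> real^'m \<Rightarrow> nat \<Rightarrow> (real^'n) set" where
  "G_sym f Lx \<epsilon> \<eta>x xt ut m =
     lattice UNIV \<eta>x \<inter> cball (phi f xt ut m) (Lx ^ m * \<epsilon> + \<eta>x)"

definition O_sym :: "(real^'n \<Rightarrow> real^'m \<Rightarrow> real^'n) \<Rightarrow> real \<Rightarrow> real \<Rightarrow> real \<Rightarrow>
    real^'n \<Rightarrow> real^'m \<Rightarrow> nat \<Rightarrow> (real^'n) list set" where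
  "O_sym f Lx \<epsilon> \<eta>x xt ut m =
     {xts. length xts = m \<and> (\<forall>p\<in>{1..m}. xts ! (p - 1) \<in> G_sym f Lx \<epsilon> \<eta>x xt ut p)}"

definition strong_eps_ASR ::
  "('x set) \<Rightarrow> ('x set) \<Rightarrow> ('u set) \<Rightarrow> (nat set) \<Rightarrow> ('x \<Rightarrow> 'u \<Rightarrow> nat \<Rightarrow> 'x list set) \<Rightarrow>
   ('x set) \<Rightarrow> ('x set) \<Rightarrow> ('u set) \<Rightarrow> (nat set) \<Rightarrow> ('x \<Rightarrow> 'u \<Rightarrow> nat \<Rightarrow> 'x list set) \<Rightarrow>
   real \<Rightarrow> ('x::real_normed_vector \<times> 'x) set \<Rightarrow> bool" where
  "strong_eps_ASR Xt Xt0 Ut Mt Ot X X0 U M Os \<epsilon> R \<longleftrightarrow>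
     R \<subseteq> Xt \<times> X \<and>
     (\<forall>xt0\<in>Xt0. \<exists>x0\<in>X0. (xt0, x0) \<in> R) \<and>
     (\<forall>(xt, x)\<in>R. norm (xt - x) \<le> \<epsilon>) \<and>
     (\<forall>(xt, x)\<in>R. \<forall>ut\<in>Ut. \<forall>mt\<in>Mt. ut \<in> U \<and> mt \<in> M \<and>
        (\<forall>xs\<in>Os x ut mt. \<exists>xts\<in>Ot xt ut mt.
           length xts = length xs \<and> (\<forall>p<mt. (xts ! p, xs ! p) \<in> R)))"

end

theory Submission
  imports Defs
begin

lemma round_lattice:
  fixes y :: "real^'n" and \<eta> :: real
  assumes "\<eta> > 0"
  shows "\<exists>z\<in>lattice UNIV \<eta>. norm (z - y) \<le> \<eta>"
proof -
  define n where "n = real CARD('n)"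
  have n0: "n > 0" unfolding n_def by simp
  define c where "c = 2 * \<eta> / sqrt n"
  have c0: "c > 0" using assms n0 unfolding c_def by simp
  define z :: "real^'n" where "z = (\<chi> i. c * real_of_int (round (y $ i / c)))"
  have mem: "z \<in> lattice UNIV \<eta>" unfolding lattice_def
  proof (intro CollectI conjI UNIV_I allI)
    fix i
    show "\<exists>a::int. z $ i = (2 * \<eta> / sqrt (real CARD('n))) * real_of_int a"
      by (rule exI[of _ "round (y $ i / c)"]) (simp add: z_def c_def n_def)
  qed
  have comp: "\<bar>z $ i - y $ i\<bar> \<le> c / 2" for i
  proof -
    have "\<bar>real_of_int (round (y $ i / c)) - y $ i / c\<bar> \<le> 1/2" by (rule of_int_round_abs_le)
    hence "c * \<bar>real_of_int (round (y $ i / c)) - y $ i / c\<bar> \<le> c * (1/2)"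
      by (rule mult_left_mono) (use c0 in auto)
    moreover have "c * \<bar>real_of_int (round (y $ i / c)) - y $ i / c\<bar> = \<bar>z $ i - y $ i\<bar>"
    proof -
      have H: "c * (real_of_int (round (y $ i / c)) - y $ i / c) = z $ i - y $ i"
        using c0 by (simp add: z_def right_diff_distrib)
      have e: "\<bar>c * (real_of_int (round (y $ i / c)) - y $ i / c)\<bar>
          = c * \<bar>real_of_int (round (y $ i / c)) - y $ i / c\<bar>"
        using c0 by (simp add: abs_mult)
      show ?thesis using e unfolding H by simp
    qed
    ultimately show ?thesis by simp
  qed
  have sq: "(z $ i - y $ i)^2 \<le> (c/2)^2" for i
    using power_mono[OF comp[of i] abs_ge_zero, of 2] by simp
  have "(norm (z - y))^2 = (\<Sum>i\<in>UNIV. ((z - y) $ i)^2)"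
    by (simp only: power2_norm_eq_inner inner_vec_def) (simp add: power2_eq_square)
  also have "\<dots> \<le> (\<Sum>i\<in>(UNIV::'n set). (c/2)^2)" using sq by (intro sum_mono) simp
  also have "\<dots> = n * (c/2)^2" by (simp add: n_def)
  also have "\<dots> = \<eta>^2"
  proof -
    have "c / 2 = \<eta> / sqrt n" unfolding c_def by simp
    hence "(c/2)^2 = \<eta>^2 / n" using n0 by (simp add: power_divide)
    thus ?thesis using n0 by simp
  qed
  finally have "(norm (z - y))^2 \<le> \<eta>^2" .
  hence "norm (z - y) \<le> \<eta>" by (rule power2_le_imp_le) (use assms in simp)
  thus ?thesis using mem by blast
qed

lemma phi_Suc: "phi f x u (Suc p) = f (phi f x u p) u"
  by (simp add: phi_def)

lemma phi_lip:
  assumes "Lx \<ge> 0" and "\<forall>x1 x2. \<forall>u\<in>U. norm (f x1 u - f x2 u) \<le> Lx * norm (x1 - x2)"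
    and "u \<in> U"
  shows "norm (phi f x u p - phi f y u p) \<le> Lx ^ p * norm (x - y)"
proof (induction p)
  case 0 then show ?case by (simp add: phi_def)
next
  case (Suc p)
  have "norm (phi f x u (Suc p) - phi f y u (Suc p)) \<le> Lx * norm (phi f x u p - phi f y u p)"
    using assms by (simp add: phi_Suc)
  also have "\<dots> \<le> Lx * (Lx ^ p * norm (x - y))" using Suc assms(1) by (rule mult_left_mono)
  finally show ?case by simp
qed

theorem lemma2:
  fixes f :: "real^'n \<Rightarrow> real^'m \<Rightarrow> real^'n"
    and X0 :: "(real^'n) set" and U :: "(real^'m) set"
    and Lx \<eta>x \<eta>u \<epsilon> :: real and Mmax :: nat
  assumes "compact X0" and "compact U"
    and "Lx \<ge> 0"
    and "\<forall>x1 x2. \<forall>u\<in>U. norm (f x1 u - f x2 u) \<le> Lx * norm (x1 - x2)"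
    and "\<eta>x > 0" and "\<eta>u > 0" and "Mmax > 0" and "\<epsilon> \<ge> \<eta>x"
  shows "strong_eps_ASR
           (lattice UNIV \<eta>x) (lattice X0 \<eta>x) (lattice U \<eta>u) {1..Mmax} (O_sym f Lx \<epsilon> \<eta>x)
           UNIV X0 U {m. m > 0} (O_A f)
           \<epsilon> {(xt, x). xt \<in> lattice UNIV \<eta>x \<and> x \<in> UNIV \<and> norm (xt - x) \<le> \<epsilon>}"
proof -
  have "\<forall>y::real^'n. \<exists>z. z \<in> lattice UNIV \<eta>x \<and> norm (z - y) \<le> \<eta>x"
    using round_lattice[OF assms(5)] by blast
  from choice[OF this] obtain rnd :: "real^'n \<Rightarrow> real^'n"
    where rnd0: "\<forall>y. rnd y \<in> lattice UNIV \<eta>x \<and> norm (rnd y - y) \<le> \<eta>x" by blast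
  have rnd: "\<And>y. rnd y \<in> lattice UNIV \<eta>x \<and> norm (rnd y - y) \<le> \<eta>x" using rnd0 by blast
  have D1: "\<forall>xt0\<in>lattice X0 \<eta>x. \<exists>x0\<in>X0. (xt0, x0) \<in>
      {(xt, x). xt \<in> lattice UNIV \<eta>x \<and> x \<in> UNIV \<and> norm (xt - x) \<le> \<epsilon>}"
  proof
    fix xt0 assume h: "xt0 \<in> lattice X0 \<eta>x"
    hence "xt0 \<in> X0" "xt0 \<in> lattice UNIV \<eta>x" unfolding lattice_def by auto
    thus "\<exists>x0\<in>X0. (xt0, x0) \<in> {(xt, x). xt \<in> lattice UNIV \<eta>x \<and> x \<in> UNIV \<and> norm (xt - x) \<le> \<epsilon>}"
      using assms(5,8) by (intro bexI[of _ xt0]) auto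
  qed
  have D3: "ut \<in> U \<and> mt \<in> {m. m > 0} \<and>
        (\<forall>xs\<in>O_A f x ut mt. \<exists>xts\<in>O_sym f Lx \<epsilon> \<eta>x xt ut mt.
           length xts = length xs \<and> (\<forall>p<mt. (xts ! p, xs ! p) \<in>
             {(xt, x). xt \<in> lattice UNIV \<eta>x \<and> x \<in> UNIV \<and> norm (xt - x) \<le> \<epsilon>}))"
    if xt: "xt \<in> lattice UNIV \<eta>x" and nx: "norm (xt - x) \<le> \<epsilon>"
      and ut: "ut \<in> lattice U \<eta>u" and mt: "mt \<in> {1..Mmax}" for xt x ut mt
  proof -
    have uU: "ut \<in> U" using ut unfolding lattice_def by auto
    have "mt > 0" using mt by auto
    moreover have "\<exists>xts\<in>O_sym f Lx \<epsilon> \<eta>x xt ut mt.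
           length xts = length xs \<and> (\<forall>p<mt. (xts ! p, xs ! p) \<in>
             {(xt, x). xt \<in> lattice UNIV \<eta>x \<and> x \<in> UNIV \<and> norm (xt - x) \<le> \<epsilon>})"
      if xs: "xs \<in> O_A f x ut mt" for xs
    proof -
      have lxs: "length xs = mt" and xsp: "\<And>p. p < mt \<Longrightarrow> xs ! p = phi f x ut (Suc p)"
      proof -
        have A: "\<forall>p\<in>{1..mt}. xs ! (p - 1) = phi f x ut p" and "length xs = mt"
          using xs unfolding O_A_def G_A_def by auto
        show "length xs = mt" by fact
        fix p assume "p < mt"
        hence "Suc p \<in> {1..mt}" by auto
        from bspec[OF A this] show "xs ! p = phi f x ut (Suc p)" by simp
      qed
      define xts where "xts = map (\<lambda>p. rnd (phi f x ut (Suc p))) [0..<mt]"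
      have lxts: "length xts = mt" unfolding xts_def by simp
      have el: "\<And>p. p < mt \<Longrightarrow> xts ! p = rnd (phi f x ut (Suc p))" unfolding xts_def by simp
      have close: "norm (xts ! p - phi f xt ut (Suc p)) \<le> Lx ^ Suc p * \<epsilon> + \<eta>x" if "p < mt" for p
      proof -
        have "norm (xts ! p - phi f xt ut (Suc p)) \<le> norm (xts ! p - phi f x ut (Suc p))
             + norm (phi f x ut (Suc p) - phi f xt ut (Suc p))"
          by (metis diff_add_cancel norm_triangle_ineq add_diff_eq)
        moreover have "norm (xts ! p - phi f x ut (Suc p)) \<le> \<eta>x" using el[OF that] rnd by simp
        moreover have "norm (phi f x ut (Suc p) - phi f xt ut (Suc p)) \<le> Lx ^ Suc p * norm (x - xt)"
          by (rule phi_lip[OF assms(3,4) uU])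
        moreover have "Lx ^ Suc p * norm (x - xt) \<le> Lx ^ Suc p * \<epsilon>"
          by (rule mult_left_mono) (use nx assms(3) in \<open>auto simp: norm_minus_commute\<close>)
        ultimately show ?thesis by linarith
      qed
      have "xts \<in> O_sym f Lx \<epsilon> \<eta>x xt ut mt"
        unfolding O_sym_def G_sym_def
      proof (intro CollectI conjI lxts ballI)
        fix p assume p: "p \<in> {1..mt}"
        hence pp: "p - 1 < mt" "Suc (p - 1) = p" by auto
        show "xts ! (p - 1) \<in> lattice UNIV \<eta>x \<inter> cball (phi f xt ut p) (Lx ^ p * \<epsilon> + \<eta>x)"
          using el[OF pp(1)] rnd close[OF pp(1)] pp(2)
          by (auto simp: dist_norm norm_minus_commute)
      qed
      moreover have "\<forall>p<mt. (xts ! p, xs ! p) \<in>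
             {(xt, x). xt \<in> lattice UNIV \<eta>x \<and> x \<in> UNIV \<and> norm (xt - x) \<le> \<epsilon>}"
      proof (intro allI impI)
        fix p assume p: "p < mt"
        have "norm (xts ! p - xs ! p) \<le> \<epsilon>"
          using el[OF p] xsp[OF p] rnd[of "phi f x ut (Suc p)"] assms(8) by simp
        thus "(xts ! p, xs ! p) \<in> {(xt, x). xt \<in> lattice UNIV \<eta>x \<and> x \<in> UNIV \<and> norm (xt - x) \<le> \<epsilon>}"
          using el[OF p] rnd by simp
      qed
      ultimately show ?thesis using lxs lxts by auto
    qed
    ultimately show ?thesis using uU by auto
  qed
  show ?thesis unfolding strong_eps_ASR_def
  proof (intro conjI)
    show "\<forall>(xt, x)\<in>{(xt, x). xt \<in> lattice UNIV \<eta>x \<and> x \<in> UNIV \<and> norm (xt - x) \<le> \<epsilon>}.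
        norm (xt - x) \<le> \<epsilon>" by auto
    show "{(xt, x). xt \<in> lattice UNIV \<eta>x \<and> x \<in> UNIV \<and> norm (xt - x) \<le> \<epsilon>} \<subseteq> lattice UNIV \<eta>x \<times> UNIV" by auto
  qed (rule D1, (rule ballI, rule case_prodI2, intro ballI, rule D3, auto))
qed

end
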